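(* Let $R$ be a local ring, $s\in R$ a central element, and let $E$ be an idempotent of $M_2(R;s)$ with $E\neq 0$ and $E\neq I_2$. Then: (1) if $s\in U(R)$, then $E$ is similar to $\left[\begin{smallmatrix} 1&0\\ 0&0\end{smallmatrix}\right]$; (2) if $s\in J(R)$, then $E$ is similar to $\left[\begin{smallmatrix} 1&0\\ 0&0\end{smallmatrix}\right]$ or $E$ is similar to $\left[\begin{smallmatrix} 0&0\\ 0&1\end{smallmatrix}\right]$.
   Context: All rings are associative with identity. A ring $R$ is local if $R/J(R)$ is a division ring, where $J(R)$ is the Jacobson radical; $U(R)$ is the group of units. For a ring $R$ and a central element $s\in R$, $M_2(R;s)$ denotes the ring whose elements are the $2\times 2$ arrays $\left[\begin{smallmatrix} a&b\\ c&d\end{smallmatrix}\right]$ with $a,b,c,d\in R$, with componentwise addition and multiplication $\left[\begin{smallmatrix} a&b\\ c&d\end{smallmatrix}\right]\left[\begin{smallmatrix} a'&b'\\ c'&d'\end{smallmatrix}\right]=\left[\begin{smallmatrix} aa'+s^2bc'&ab'+bd'\\ ca'+dc'&s^2cb'+dd'\end{smallmatrix}\right]$, with identity $I_2$. Two elements $A,B\in M_2(R;s)$ are similar if $B=P^{-1}AP$ for some unit $P$ of $M_2(R;s)$. *)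

theory Defs
  imports Main
begin

text \<open>Rings are modelled by the type class ring_1 (associative, with identity,
not necessarily commutative).\<close>

definition units_of_ring :: "'a::ring_1 set" where
  "units_of_ring = {u. \<exists>v. u * v = 1 \<and> v * u = 1}"

definition left_ideal :: "'a::ring_1 set \<Rightarrow> bool" where
  "left_ideal I \<longleftrightarrow> 0 \<in> I \<and> (\<forall>x\<in>I. \<forall>y\<in>I. x + y \<in> I) \<and> (\<forall>x\<in>I. - x \<in> I)
     \<and> (\<forall>r. \<forall>x\<in>I. r * x \<in> I)"

definition maximal_left_ideal :: "'a::ring_1 set \<Rightarrow> bool" where
  "maximal_left_ideal I \<longleftrightarrow> left_ideal I \<and> I \<noteq> UNIV \<and>
     (\<forall>K. left_ideal K \<and> I \<subseteq> K \<and> K \<noteq> UNIV \<longrightarrow> K = I)"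

definition jacobson :: "'a::ring_1 set" where
  "jacobson = \<Inter> {I. maximal_left_ideal I}"

text \<open>R is local iff R/J(R) is a division ring, i.e. the quotient is nontrivial
 (1 not in J) and every element not in J is invertible modulo J.\<close>
definition local_ring :: "'a::ring_1 itself \<Rightarrow> bool" where
  "local_ring _ \<longleftrightarrow> (1::'a) \<notin> jacobson \<and>
     (\<forall>x::'a. x \<notin> jacobson \<longrightarrow> (\<exists>y. x * y - 1 \<in> jacobson \<and> y * x - 1 \<in> jacobson))"

definition central :: "'a::ring_1 \<Rightarrow> bool" where
  "central s \<longleftrightarrow> (\<forall>x. s * x = x * s)"

text \<open>Elements of M_2(R;s) as quadruples (a,b,c,d) standing for [[a,b],[c,d]].\<close>
type_synonym 'a mat2 = "'a \<times> 'a \<times> 'a \<times> 'a"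

fun mmult :: "'a::ring_1 \<Rightarrow> 'a mat2 \<Rightarrow> 'a mat2 \<Rightarrow> 'a mat2" where
  "mmult s (a, b, c, d) (a', b', c', d') =
     (a * a' + s^2 * b * c', a * b' + b * d', c * a' + d * c', s^2 * c * b' + d * d')"

definition mone :: "'a::ring_1 mat2" where
  "mone = (1, 0, 0, 1)"

definition mzero :: "'a::ring_1 mat2" where
  "mzero = (0, 0, 0, 0)"

definition munit :: "'a::ring_1 \<Rightarrow> 'a mat2 \<Rightarrow> bool" where
  "munit s P \<longleftrightarrow> (\<exists>Q. mmult s P Q = mone \<and> mmult s Q P = mone)"

definition msimilar :: "'a::ring_1 \<Rightarrow> 'a mat2 \<Rightarrow> 'a mat2 \<Rightarrow> bool" where
  "msimilar s A B \<longleftrightarrow> (\<exists>P Q. mmult s P Q = mone \<and> mmult s Q P = mone \<and>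
      B = mmult s (mmult s Q A) P)"

end

theory Submission
  imports Defs
begin



lemma J_mem: "x \<in> jacobson \<longleftrightarrow> (\<forall>I. maximal_left_ideal I \<longrightarrow> x \<in> I)"
  by (auto simp: jacobson_def)

lemma J_zero: "(0::'a::ring_1) \<in> jacobson"
  by (auto simp: J_mem maximal_left_ideal_def left_ideal_def)
lemma J_add: "x \<in> jacobson \<Longrightarrow> y \<in> jacobson \<Longrightarrow> (x::'a::ring_1) + y \<in> jacobson"
  by (auto simp: J_mem maximal_left_ideal_def left_ideal_def)
lemma J_neg: "x \<in> jacobson \<Longrightarrow> - (x::'a::ring_1) \<in> jacobson"
  by (auto simp: J_mem maximal_left_ideal_def left_ideal_def)
lemma J_lmult: "x \<in> jacobson \<Longrightarrow> (r::'a::ring_1) * x \<in> jacobson"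
  by (auto simp: J_mem maximal_left_ideal_def left_ideal_def)
lemma J_diff: "x \<in> jacobson \<Longrightarrow> y \<in> jacobson \<Longrightarrow> (x::'a::ring_1) - y \<in> jacobson"
  using J_add[OF _ J_neg] by (metis diff_conv_add_uminus)

lemma left_ideal_UNIV: "left_ideal K \<Longrightarrow> (1::'a::ring_1) \<in> K \<Longrightarrow> K = UNIV"
  unfolding left_ideal_def by (metis UNIV_eq_I mult.right_neutral)

lemma J_leftinv:
  assumes "(i::'a::ring_1) \<in> jacobson"
  shows "\<exists>r. r * (1 - i) = 1"
proof (rule ccontr)
  assume nex: "\<not> ?thesis"
  define L where "L = {r * (1 - i) | r. True}"
  have oneL: "1 \<notin> L" using nex by (auto simp: L_def)
  have lL: "left_ideal L"
    unfolding left_ideal_def L_def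
    by (auto, metis mult_zero_left, metis distrib_right, metis minus_mult_left, metis mult.assoc)
  define A where "A = {K. left_ideal K \<and> L \<subseteq> K \<and> (1::'a) \<notin> K}"
  have "\<forall>C\<in>chains A. \<exists>U\<in>A. \<forall>X\<in>C. X \<subseteq> U"
  proof
    fix C assume C: "C \<in> chains A"
    show "\<exists>U\<in>A. \<forall>X\<in>C. X \<subseteq> U"
    proof (cases "C = {}")
      case True
      then show ?thesis using lL oneL by (auto simp: A_def)
    next
      case False
      have CA: "C \<subseteq> A" and ch: "\<forall>x\<in>C. \<forall>y\<in>C. x \<subseteq> y \<or> y \<subseteq> x"
        using C by (auto simp: chains_def chain_subset_def)
      have "\<Union>C \<in> A"
        unfolding A_def
      proof (intro CollectI conjI)
        show "L \<subseteq> \<Union>C" using False CA by (auto simp: A_def)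
        show "1 \<notin> \<Union>C" using CA by (auto simp: A_def)
        show "left_ideal (\<Union>C)"
          unfolding left_ideal_def
        proof (intro conjI ballI allI)
          show "0 \<in> \<Union>C" using False CA by (auto simp: A_def left_ideal_def)
          fix x assume "x \<in> \<Union>C"
          then obtain K where K: "K \<in> C" "x \<in> K" by auto
          then have lK: "left_ideal K" using CA by (auto simp: A_def)
          show "- x \<in> \<Union>C" using K lK by (auto simp: left_ideal_def)
          fix r show "r * x \<in> \<Union>C" using K lK unfolding left_ideal_def by blast
        next
          fix x y assume "x \<in> \<Union>C" "y \<in> \<Union>C"
          then obtain K K' where K: "K \<in> C" "x \<in> K" "K' \<in> C" "y \<in> K'" by auto
          then have lK: "left_ideal K" "left_ideal K'" using CA by (auto simp: A_def)
          from ch K consider "K \<subseteq> K'" | "K' \<subseteq> K" by blast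
          then show "x + y \<in> \<Union>C"
          proof cases
            case 1 then have "x + y \<in> K'" using K lK unfolding left_ideal_def by blast
            then show ?thesis using K by blast
          next
            case 2 then have "x + y \<in> K" using K lK unfolding left_ideal_def by blast
            then show ?thesis using K by blast
          qed
        qed
      qed
      then show ?thesis by blast
    qed
  qed
  from Zorn_Lemma2[OF this] obtain M where M: "M \<in> A" "\<forall>X\<in>A. M \<subseteq> X \<longrightarrow> X = M" by blast
  have "maximal_left_ideal M"
    unfolding maximal_left_ideal_def
  proof (intro conjI allI impI)
    show "left_ideal M" using M by (auto simp: A_def)
    show "M \<noteq> UNIV" using M by (auto simp: A_def)
    fix K assume K: "left_ideal K \<and> M \<subseteq> K \<and> K \<noteq> UNIV"
    then have "1 \<notin> K" using left_ideal_UNIV by blast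
    then have "K \<in> A" using K M by (auto simp: A_def)
    then show "K = M" using M K by blast
  qed
  then have "i \<in> M" using assms by (auto simp: J_mem)
  moreover have "1 * (1 - i) \<in> L" unfolding L_def by blast
  then have "1 - i \<in> M" using M by (auto simp: A_def)
  moreover have lM: "left_ideal M" using M by (auto simp: A_def)
  ultimately have "(1 - i) + i \<in> M" unfolding left_ideal_def by blast
  then have "1 \<in> M" by simp
  then show False using M by (auto simp: A_def)
qed



lemma loc_one: "local_ring TYPE('a::ring_1) \<Longrightarrow> (1::'a) \<notin> jacobson"
  by (simp add: local_ring_def)

lemma loc_leftinv:
  assumes loc: "local_ring TYPE('a::ring_1)" and x: "(x::'a) \<notin> jacobson"
  shows "\<exists>z. z * x = 1"
proof -
  obtain y where "y * x - 1 \<in> jacobson" using loc x by (auto simp: local_ring_def)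
  then have "1 - y * x \<in> jacobson" using J_neg by fastforce
  from J_leftinv[OF this] obtain r where "r * (1 - (1 - y * x)) = 1" by blast
  then have "(r * y) * x = 1" by (simp add: mult.assoc)
  then show ?thesis by blast
qed

lemma unit_notJ:
  assumes loc: "local_ring TYPE('a::ring_1)" and "v * u = (1::'a)"
  shows "u \<notin> jacobson"
  using J_lmult[of u v] assms loc_one[OF loc] by auto

lemma loc_unit:
  assumes loc: "local_ring TYPE('a::ring_1)" and x: "(x::'a) \<notin> jacobson"
  shows "\<exists>z. x * z = 1 \<and> z * x = 1"
proof -
  obtain z where zx: "z * x = 1" using loc_leftinv[OF loc x] by blast
  have "z \<notin> jacobson"
  proof
    assume zJ: "z \<in> jacobson"
    then have "x * z \<in> jacobson" by (rule J_lmult)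
    then have "1 - x * z \<notin> jacobson"
      using loc_one[OF loc] J_add by fastforce
    have "1 - x * z \<in> jacobson"
    proof -
      have "x * z \<in> jacobson" using zJ by (rule J_lmult)
      from J_leftinv[OF this] obtain v where v: "v * (1 - x * z) = 1" by blast
      have xzxz: "x * (z * (x * z)) = x * z"
      proof -
        have "x * (z * (x * z)) = x * (z * x) * z" by (simp add: mult.assoc)
        also have "\<dots> = x * z" using zx by simp
        finally show ?thesis .
      qed
      have ee: "(1 - x * z) * (1 - x * z) = 1 - x * z"
        by (simp add: algebra_simps xzxz)
      have "1 - x * z = (v * (1 - x * z)) * (1 - x * z)" using v by simp
      also have "\<dots> = 1" by (subst mult.assoc, subst ee, rule v)
      finally have "x * z = 0" by simp
      have "(1::'a) = (z * x) * (z * x)" using zx by simp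
      also have "\<dots> = z * (x * z) * x" by (simp add: mult.assoc)
      also have "\<dots> = 0" using \<open>x * z = 0\<close> by simp
      finally show ?thesis using J_zero by simp
    qed
    with \<open>1 - x * z \<notin> jacobson\<close> show False by simp
  qed
  then obtain w where wz: "w * z = 1" using loc_leftinv[OF loc] by blast
  have "w = w * (z * x)" using zx by simp
  also have "\<dots> = (w * z) * x" by (simp add: mult.assoc)
  also have "\<dots> = x" using wz by simp
  finally have "w = x" .
  then show ?thesis using wz zx by blast
qed

lemma J_rmult:
  assumes loc: "local_ring TYPE('a::ring_1)" and x: "(x::'a) \<in> jacobson"
  shows "x * r \<in> jacobson"
proof (rule ccontr)
  assume "x * r \<notin> jacobson"
  then obtain w where w: "x * r * w = 1" "w * (x * r) = 1" using loc_unit[OF loc] by blast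
  define y where "y = r * w"
  have xy: "x * y = 1" using w by (simp add: y_def mult.assoc)
  have "y * x \<in> jacobson" using x by (rule J_lmult)
  then have "1 - y * x \<notin> jacobson" using loc_one[OF loc] J_add by fastforce
  then obtain v where v: "v * (1 - y * x) = 1" using loc_unit[OF loc] by blast
  have yxyx: "y * (x * (y * x)) = y * x"
  proof -
    have "y * (x * (y * x)) = y * (x * y) * x" by (simp add: mult.assoc)
    also have "\<dots> = y * x" using xy by simp
    finally show ?thesis .
  qed
  have ee: "(1 - y * x) * (1 - y * x) = 1 - y * x"
    by (simp add: algebra_simps yxyx)
  have "1 - y * x = (v * (1 - y * x)) * (1 - y * x)" using v by simp
  also have "\<dots> = 1" by (subst mult.assoc, subst ee, rule v)
  finally have "y * x = 0" by simp
  have "x = (x * y) * x" using xy by simp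
  also have "\<dots> = x * (y * x)" by (simp add: mult.assoc)
  also have "\<dots> = 0" using \<open>y * x = 0\<close> by simp
  finally have "x = 0" .
  then show False using \<open>x * r \<notin> jacobson\<close> J_zero[where 'a='a] by simp
qed

lemma one_minus_J:
  assumes loc: "local_ring TYPE('a::ring_1)" and "(x::'a) \<in> jacobson"
  shows "1 - x \<notin> jacobson"
  using assms loc_one[OF loc] J_add by fastforce

lemma unit_plus_J:
  assumes loc: "local_ring TYPE('a::ring_1)" and "(u::'a) \<notin> jacobson" "j \<in> jacobson"
  shows "u + j \<notin> jacobson"
  using assms J_diff by fastforce

lemma mult_notJ:
  assumes loc: "local_ring TYPE('a::ring_1)" and "(x::'a) \<notin> jacobson" "y \<notin> jacobson"
  shows "x * y \<notin> jacobson"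
proof -
  obtain x' where x': "x * x' = 1" "x' * x = 1" using loc_unit[OF loc assms(2)] by blast
  obtain y' where y': "y * y' = 1" "y' * y = 1" using loc_unit[OF loc assms(3)] by blast
  have "(y' * x') * (x * y) = y' * (x' * x) * y" by (simp add: mult.assoc)
  also have "\<dots> = 1" using x' y' by simp
  finally have "(y' * x') * (x * y) = 1" .
  then show ?thesis using unit_notJ[OF loc] by blast
qed



lemma central_s2: "central s \<Longrightarrow> s^2 * x = x * (s::'a::ring_1)^2"
  unfolding central_def power2_eq_square by (metis mult.assoc)

lemma central_s2': "central s \<Longrightarrow> x * ((s::'a::ring_1)^2 * y) = s^2 * (x * y)"
  by (metis central_s2 mult.assoc)

lemma inv_assoc: "a * b = (1::'a::ring_1) \<Longrightarrow> a * (b * x) = x"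
  by (metis mult.assoc mult_1)

lemma mat_cases: obtains a b c d where "A = (a, b, c, d)"
  by (metis prod.exhaust)

lemma mmult_assoc:
  assumes cs: "central (s::'a::ring_1)"
  shows "mmult s (mmult s A B) C = mmult s A (mmult s B C)"
proof -
  obtain a b c d where A: "A = (a,b,c,d)" by (rule mat_cases)
  obtain a1 b1 c1 d1 where B: "B = (a1,b1,c1,d1)" by (rule mat_cases)
  obtain a2 b2 c2 d2 where C: "C = (a2,b2,c2,d2)" by (rule mat_cases)
  show ?thesis unfolding A B C
    by (simp add: algebra_simps central_s2'[OF cs])
qed

lemma mmult_one: "mmult s mone A = A" "mmult s A mone = A"
  by (cases A, auto simp: mone_def)+

lemma munit_mult:
  assumes cs: "central s" and "munit s P" "munit s Q"
  shows "munit s (mmult s P Q)"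
proof -
  obtain P' Q' where P': "mmult s P P' = mone" "mmult s P' P = mone"
    and Q': "mmult s Q Q' = mone" "mmult s Q' Q = mone"
    using assms unfolding munit_def by blast
  have "mmult s (mmult s P Q) (mmult s Q' P') = mone"
    by (simp add: mmult_assoc[OF cs, symmetric]) (simp add: mmult_assoc[OF cs] Q' P' mmult_one)
  moreover have "mmult s (mmult s Q' P') (mmult s P Q) = mone"
    by (simp add: mmult_assoc[OF cs, symmetric]) (simp add: mmult_assoc[OF cs] Q' P' mmult_one)
  ultimately show ?thesis unfolding munit_def by blast
qed

lemma msim_of:
  assumes cs: "central s" and PQ: "mmult s P Q = mone" "mmult s Q P = mone"
    and EP: "mmult s E P = mmult s P F"
  shows "msimilar s E F"
proof -
  have "F = mmult s (mmult s Q P) F" by (simp add: PQ mmult_one)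
  also have "\<dots> = mmult s Q (mmult s E P)" by (simp add: mmult_assoc[OF cs] EP)
  also have "\<dots> = mmult s (mmult s Q E) P" by (simp add: mmult_assoc[OF cs])
  finally show ?thesis unfolding msimilar_def using PQ by blast
qed

lemma msim_unit:
  assumes cs: "central s" and "munit s P" and EP: "mmult s E P = mmult s P F"
  shows "msimilar s E F"
  using assms msim_of unfolding munit_def by blast

lemma msim_trans:
  assumes cs: "central s" and "msimilar s E F" "msimilar s F G"
  shows "msimilar s E G"
proof -
  obtain P Q where PQ: "mmult s P Q = mone" "mmult s Q P = mone" "F = mmult s (mmult s Q E) P"
    using assms unfolding msimilar_def by blast
  obtain P2 Q2 where PQ2: "mmult s P2 Q2 = mone" "mmult s Q2 P2 = mone" "G = mmult s (mmult s Q2 F) P2"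
    using assms unfolding msimilar_def by blast
  have "munit s (mmult s P P2)" using munit_mult[OF cs] PQ PQ2 unfolding munit_def by blast
  moreover have "mmult s E (mmult s P P2) = mmult s (mmult s P P2) G"
  proof -
    have r1: "mmult s P2 (mmult s Q2 X) = X" for X
      by (simp add: mmult_assoc[OF cs, symmetric] PQ2 mmult_one)
    have r2: "mmult s P (mmult s Q X) = X" for X
      by (simp add: mmult_assoc[OF cs, symmetric] PQ mmult_one)
    show ?thesis by (simp add: PQ2(3) PQ(3) mmult_assoc[OF cs] r1 r2)
  qed
  ultimately show ?thesis using msim_unit[OF cs] by blast
qed



lemma crit1:
  assumes cs: "central (s::'a::ring_1)" and p: "p * p' = 1" "p' * p = 1"
    and d: "(t - s^2 * r * p' * q) * d' = 1" "d' * (t - s^2 * r * p' * q) = 1"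
  shows "munit s (p, q, r, t)"
proof -
  define dl where "dl = t - s^2 * r * p' * q"
  have uL: "munit s (1, 0, r * p', 1)"
    unfolding munit_def by (rule exI[of _ "(1, 0, -(r*p'), 1)"]) (simp add: mone_def)
  have uD: "munit s (p, 0, 0, dl)"
    unfolding munit_def using p d by (intro exI[of _ "(p', 0, 0, d')"]) (simp add: mone_def dl_def)
  have uU: "munit s (1, p' * q, 0, 1)"
    unfolding munit_def by (rule exI[of _ "(1, -(p'*q), 0, 1)"]) (simp add: mone_def)
  have eq: "(p, q, r, t) = mmult s (mmult s (1, 0, r * p', 1) (p, 0, 0, dl)) (1, p' * q, 0, 1)"
    using p by (simp add: dl_def mult.assoc inv_assoc)
  show ?thesis unfolding eq by (intro munit_mult[OF cs] uL uD uU)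
qed

lemma crit2:
  assumes cs: "central (s::'a::ring_1)" and t: "t * t' = 1" "t' * t = 1"
    and d: "(p - s^2 * q * t' * r) * d' = 1" "d' * (p - s^2 * q * t' * r) = 1"
  shows "munit s (p, q, r, t)"
proof -
  define dl where "dl = p - s^2 * q * t' * r"
  have uL: "munit s (1, 0, t' * r, 1)"
    unfolding munit_def by (rule exI[of _ "(1, 0, -(t'*r), 1)"]) (simp add: mone_def)
  have uD: "munit s (dl, 0, 0, t)"
    unfolding munit_def using t d by (intro exI[of _ "(d', 0, 0, t')"]) (simp add: mone_def dl_def)
  have uU: "munit s (1, q * t', 0, 1)"
    unfolding munit_def by (rule exI[of _ "(1, -(q*t'), 0, 1)"]) (simp add: mone_def)
  have eq: "(p, q, r, t) = mmult s (mmult s (1, q * t', 0, 1) (dl, 0, 0, t)) (1, 0, t' * r, 1)"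
    using t by (simp add: dl_def mult.assoc inv_assoc)
  show ?thesis unfolding eq by (intro munit_mult[OF cs] uL uD uU)
qed

lemma unit_idem:
  assumes cs: "central s" and "munit s E" and "mmult s E E = E"
  shows "E = mone"
proof -
  obtain Q where Q: "mmult s Q E = mone" using assms unfolding munit_def by blast
  have "E = mmult s (mmult s Q E) E" by (simp add: Q mmult_one)
  also have "\<dots> = mone" by (subst mmult_assoc[OF cs], simp add: assms Q)
  finally show ?thesis .
qed



lemma J_prod:
  assumes loc: "local_ring TYPE('a::ring_1)" and "(z::'a) \<in> jacobson"
  shows "u * z * v \<in> jacobson"
  using J_rmult[OF loc J_lmult[OF assms(2)]] .

lemma J_dich:
  assumes loc: "local_ring TYPE('a::ring_1)" and "(x::'a) * (1 - x) \<in> jacobson"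
  shows "x \<in> jacobson \<or> 1 - x \<in> jacobson"
  using mult_notJ[OF loc] assms by blast

lemma J_unit:
  assumes loc: "local_ring TYPE('a::ring_1)" and "(x::'a) \<notin> jacobson"
  obtains x' where "x * x' = 1" "x' * x = 1"
  using loc_unit[OF assms] by blast

lemma J_minus_iff: "- (x::'a::ring_1) \<in> jacobson \<longleftrightarrow> x \<in> jacobson"
  using J_neg by fastforce

lemma one_minus_one_minus:
  assumes loc: "local_ring TYPE('a::ring_1)" and "1 - (x::'a) \<in> jacobson"
  shows "x \<notin> jacobson"
  using one_minus_J[OF assms] by simp

lemma core:
  assumes loc: "local_ring TYPE('a::ring_1)" and cs: "central (s::'a)"
    and idem: "mmult s (a, b, c, d) (a, b, c, d) = (a, b, c, d)"
    and nz: "(a, b, c, d) \<noteq> mzero" and no: "(a, b, c, d) \<noteq> mone"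
    and H: "\<And>x y. s^2 * b * x * c * y \<in> jacobson" "\<And>x y. s^2 * c * x * b * y \<in> jacobson"
  shows "msimilar s (a, b, c, d) (1, 0, 0, 0) \<or> msimilar s (a, b, c, d) (0, 0, 0, 1)"
proof -
  have e1: "a * a + s^2 * b * c = a" and e2: "a * b + b * d = b"
    and e3: "c * a + d * c = c" and e4: "s^2 * c * b + d * d = d"
    using idem by simp_all
  have s1: "s^2 * (b * c) = a - a * a" using e1 by (simp add: mult.assoc algebra_simps)
  have s4: "s^2 * (c * b) = d - d * d" using e4 by (simp add: mult.assoc algebra_simps)
  have aJ: "a * (1 - a) \<in> jacobson"
    using H(1)[of 1 1] s1 by (simp add: algebra_simps)
  have dJ: "d * (1 - d) \<in> jacobson"
    using H(2)[of 1 1] s4 by (simp add: algebra_simps)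
  have s2: "s^2 * (c * a) = s^2 * c - s^2 * (d * c)" using e3
    by (metis add_diff_cancel_right' mult.assoc right_diff_distrib)
  have s3: "a * b = b - b * d" using e2 by (simp add: algebra_simps)
  have s3': "c * a = c - d * c" using e3 by (simp add: algebra_simps)
  from J_dich[OF loc aJ] J_dich[OF loc dJ]
  consider (JJ) "a \<in> jacobson" "d \<in> jacobson" | (UU) "1 - a \<in> jacobson" "1 - d \<in> jacobson"
    | (UJ) "1 - a \<in> jacobson" "d \<in> jacobson" | (JU) "a \<in> jacobson" "1 - d \<in> jacobson"
    by blast
  then show ?thesis
  proof cases
    case UJ
    have an: "a \<notin> jacobson" using one_minus_one_minus[OF loc UJ(1)] .
    then obtain a' where a': "a * a' = 1" "a' * a = 1" using J_unit[OF loc] by blast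
    have "1 - d \<notin> jacobson" using one_minus_J[OF loc UJ(2)] .
    then have "(1 - d) - s^2 * c * a' * (- b) \<notin> jacobson"
      using unit_plus_J[OF loc _ H(2)[of a' 1]] by simp
    then obtain dd where dd: "((1 - d) - s^2 * c * a' * (- b)) * dd = 1"
        "dd * ((1 - d) - s^2 * c * a' * (- b)) = 1" using J_unit[OF loc] by blast
    have u: "munit s (a, - b, c, 1 - d)" by (rule crit1[OF cs a' dd])
    have "mmult s (a, b, c, d) (a, - b, c, 1 - d) = mmult s (a, - b, c, 1 - d) (1, 0, 0, 0)"
      using e1 e2 e3 e4 s3 s4 by (simp add: algebra_simps)
    then show ?thesis using msim_unit[OF cs u] by blast
  next
    case JU
    have "1 - a \<notin> jacobson" using one_minus_J[OF loc JU(1)] .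
    then obtain a' where a': "(1 - a) * a' = 1" "a' * (1 - a) = 1" using J_unit[OF loc] by blast
    have "d \<notin> jacobson" using one_minus_one_minus[OF loc JU(2)] .
    then have "d - s^2 * (- c) * a' * b \<notin> jacobson"
      using unit_plus_J[OF loc _ H(2)[of a' 1]] by simp
    then obtain dd where dd: "(d - s^2 * (- c) * a' * b) * dd = 1"
        "dd * (d - s^2 * (- c) * a' * b) = 1" using J_unit[OF loc] by blast
    have u: "munit s (1 - a, b, - c, d)" by (rule crit1[OF cs a' dd])
    have "mmult s (a, b, c, d) (1 - a, b, - c, d) = mmult s (1 - a, b, - c, d) (0, 0, 0, 1)"
      using e1 e2 e3 e4 s1 s3' s4 by (simp add: algebra_simps)
    then show ?thesis using msim_unit[OF cs u] by blast
  next
    case UU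
    have an: "a \<notin> jacobson" using one_minus_one_minus[OF loc UU(1)] .
    then obtain a' where a': "a * a' = 1" "a' * a = 1" using J_unit[OF loc] by blast
    have "d \<notin> jacobson" using one_minus_one_minus[OF loc UU(2)] .
    then have "d - s^2 * c * a' * b \<notin> jacobson"
      using unit_plus_J[OF loc _ J_neg[OF H(2)[of a' 1]]] by simp
    then obtain dd where dd: "(d - s^2 * c * a' * b) * dd = 1"
        "dd * (d - s^2 * c * a' * b) = 1" using J_unit[OF loc] by blast
    have u: "munit s (a, b, c, d)" by (rule crit1[OF cs a' dd])
    have "(a, b, c, d) = mone" by (rule unit_idem[OF cs u idem])
    with no show ?thesis by simp
  next
    case JJ
    have "1 - a \<notin> jacobson" using one_minus_J[OF loc JJ(1)] .
    then obtain a' where a': "(1 - a) * a' = 1" "a' * (1 - a) = 1" using J_unit[OF loc] by blast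
    have "1 - d \<notin> jacobson" using one_minus_J[OF loc JJ(2)] .
    then have "(1 - d) - s^2 * (- c) * a' * (- b) \<notin> jacobson"
      using unit_plus_J[OF loc _ J_neg[OF H(2)[of a' 1]]] by simp
    then obtain dd where dd: "((1 - d) - s^2 * (- c) * a' * (- b)) * dd = 1"
        "dd * ((1 - d) - s^2 * (- c) * a' * (- b)) = 1" using J_unit[OF loc] by blast
    have u: "munit s (1 - a, - b, - c, 1 - d)" by (rule crit1[OF cs a' dd])
    have id2: "mmult s (1 - a, - b, - c, 1 - d) (1 - a, - b, - c, 1 - d) = (1 - a, - b, - c, 1 - d)"
      using e1 e2 e3 e4 s1 s3 s3' s4 by (simp add: algebra_simps)
    have "(1 - a, - b, - c, 1 - d) = mone" by (rule unit_idem[OF cs u id2])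
    then have "(a, b, c, d) = mzero" by (simp add: mone_def mzero_def)
    with nz show ?thesis by simp
  qed
qed



lemma caseY:
  assumes loc: "local_ring TYPE('a::ring_1)" and cs: "central (s::'a)"
    and idem: "mmult s (a, b, c, d) (a, b, c, d) = (a, b, c, d)"
    and sn: "s \<notin> jacobson" and cn: "c \<notin> jacobson"
  shows "msimilar s (a, b, c, d) (1, 0, 0, 0)"
proof -
  have e1: "a * a + s^2 * b * c = a" and e2: "a * b + b * d = b"
    and e3: "c * a + d * c = c" and e4: "s^2 * c * b + d * d = d"
    using idem by simp_all
  have s1: "s^2 * (b * c) = a - a * a" using e1 by (simp add: mult.assoc algebra_simps)
  have "s^2 \<notin> jacobson" using mult_notJ[OF loc sn sn] by (simp add: power2_eq_square)
  then have "s^2 * c \<notin> jacobson" using mult_notJ[OF loc _ cn] by blast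
  then have "- (s^2 * c) \<notin> jacobson" using J_minus_iff by blast
  then obtain t' where t': "- (s^2 * c) * t' = 1" "t' * - (s^2 * c) = 1" using J_unit[OF loc] by blast
  have k: "s^2 * (t' * c) = -1"
  proof -
    have "t' * (s^2 * c) = -1" using t'(2) by (simp add: minus_equation_iff)
    then show ?thesis by (metis central_s2[OF cs] mult.assoc)
  qed
  have "s^2 * (1 - a) * t' * c = (1 - a) * (s^2 * (t' * c))"
    by (simp add: mult.assoc central_s2'[OF cs])
  also have "\<dots> = a - 1" using k by simp
  finally have "a - s^2 * (1 - a) * t' * c = 1" by simp
  then have dd: "(a - s^2 * (1 - a) * t' * c) * 1 = 1" "1 * (a - s^2 * (1 - a) * t' * c) = 1" by simp_all
  have u: "munit s (a, 1 - a, c, - (s^2 * c))" by (rule crit2[OF cs t' dd])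
  have "mmult s (a, b, c, d) (a, 1 - a, c, - (s^2 * c)) = mmult s (a, 1 - a, c, - (s^2 * c)) (1, 0, 0, 0)"
  proof -
    have g2: "a * (1 - a) + b * (- (s^2 * c)) = 0"
      using s1 by (simp add: algebra_simps central_s2'[OF cs])
    have "s^2 * c * (1 - a) + d * (- (s^2 * c)) = s^2 * (c - (c * a + d * c))"
      by (simp add: algebra_simps central_s2'[OF cs])
    then have g4: "s^2 * c * (1 - a) + d * (- (s^2 * c)) = 0" using e3 by simp
    have "mmult s (a, b, c, d) (a, 1 - a, c, - (s^2 * c)) = (a, 0, c, 0)"
      by (simp only: mmult.simps e1 g2 e3 g4)
    then show ?thesis by simp
  qed
  then show ?thesis using msim_unit[OF cs u] by blast
qed

lemma F2_F1:
  assumes cs: "central (s::'a::ring_1)" and sv: "s * v = 1"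
  shows "msimilar s (0, 0, 0, 1) (1, 0, 0, 0)"
proof -
  have k: "s^2 * v^2 = 1"
  proof -
    have "s^2 * v^2 = s * (s * v) * v" by (simp add: power2_eq_square mult.assoc)
    then show ?thesis using sv by simp
  qed
  show ?thesis
    by (rule msim_of[OF cs, of "(0, 1, 1, 0)" "(0, v^2, v^2, 0)"]) (simp_all add: mone_def k)
qed

theorem lemma2p7:
  fixes s :: "'a::ring_1" and E :: "'a mat2"
  assumes "local_ring TYPE('a)"
    and "central s"
    and "mmult s E E = E"
    and "E \<noteq> mzero" and "E \<noteq> mone"
  shows "(s \<in> units_of_ring \<longrightarrow> msimilar s E (1, 0, 0, 0))
       \<and> (s \<in> jacobson \<longrightarrow> msimilar s E (1, 0, 0, 0) \<or> msimilar s E (0, 0, 0, 1))"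
proof -
  note loc = assms(1) and cs = assms(2)
  obtain a b c d where E: "E = (a, b, c, d)" by (rule mat_cases)
  have idem: "mmult s (a, b, c, d) (a, b, c, d) = (a, b, c, d)" using assms(3) E by simp
  have nz: "(a, b, c, d) \<noteq> mzero" and no: "(a, b, c, d) \<noteq> mone" using assms(4,5) E by simp_all
  have part1: "msimilar s E (1, 0, 0, 0)" if su: "s \<in> units_of_ring"
  proof -
    obtain v where v: "s * v = 1" "v * s = 1" using su by (auto simp: units_of_ring_def)
    have sn: "s \<notin> jacobson" using unit_notJ[OF loc v(2)] .
    show ?thesis
    proof (cases "b \<in> jacobson \<or> c \<in> jacobson")
      case True
      have H1: "s^2 * b * x * c * y \<in> jacobson" for x y
        using True J_rmult[OF loc] J_lmult by (metis mult.assoc)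
      have H2: "s^2 * c * x * b * y \<in> jacobson" for x y
        using True J_rmult[OF loc] J_lmult by (metis mult.assoc)
      from core[OF loc cs idem nz no H1 H2]
      show ?thesis
      proof
        assume "msimilar s (a, b, c, d) (0, 0, 0, 1)"
        from msim_trans[OF cs this F2_F1[OF cs v(1)]] show ?thesis using E by simp
      qed (use E in simp)
    next
      case False
      then have "c \<notin> jacobson" by blast
      from caseY[OF loc cs idem sn this] show ?thesis using E by simp
    qed
  qed
  have part2: "msimilar s E (1, 0, 0, 0) \<or> msimilar s E (0, 0, 0, 1)" if sJ: "s \<in> jacobson"
  proof -
    have s2J: "s^2 \<in> jacobson" using J_lmult[OF sJ, of s] by (simp add: power2_eq_square)
    have H1: "s^2 * b * x * c * y \<in> jacobson" for x y
      using J_rmult[OF loc] s2J by blast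
    have H2: "s^2 * c * x * b * y \<in> jacobson" for x y
      using J_rmult[OF loc] s2J by blast
    from core[OF loc cs idem nz no H1 H2] show ?thesis using E by simp
  qed
  show ?thesis using part1 part2 by blast
qed

end
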